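(* Let $\mathbf{c}=\{c_n\}_{n=-\infty}^{\infty}$ be a complex sequence such that, for some $\theta_0\in[0,\pi/2)$, $c_n\pm c_{-n}\in K(\theta_0)$ for $n=1,2,\dots$, and suppose there exist a natural number $N_0$ and a constant $M(\mathbf c)>0$ with $$\sum_{n=m}^{2m}|c_n-c_{n+1}|\le M(\mathbf c)\max_{m\le n<m+N_0}|c_n|\qquad\text{for all } m=1,2,\dots.$$ Let $S_n(f,x)=\sum_{k=-n}^{n}c_ke^{ikx}$ and $f(x)=\lim_{n\to\infty}S_n(f,x)$ wherever this limit exists. If $\lim_{n\to\infty}\|f-S_n(f)\|=0$, then $\lim_{n\to\infty}nc_n=0$.
   Context: For $\theta\in[0,\pi/2]$, $K(\theta)=\{z\in\mathbb C: |\arg z|\le\theta\}$. $\|g\|=\sup_{x\in\mathbb R}|g(x)|$ for $2\pi$-periodic $g$. *)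

theory Defs
  imports "HOL-Complex_Analysis.Complex_Analysis"
begin

definition sector :: "real \<Rightarrow> complex set" where
  "sector \<theta> = {z. z = 0 \<or> \<bar>Arg z\<bar> \<le> \<theta>}"

definition partial_sum :: "(int \<Rightarrow> complex) \<Rightarrow> nat \<Rightarrow> real \<Rightarrow> complex" where
  "partial_sum c n x = (\<Sum>k\<in>{-int n..int n}. c k * exp (\<i> * of_int k * of_real x))"

end

theory Submission
  imports Defs
begin

lemma sector_Re:
  assumes "z \<in> sector t" "0 \<le> t" "t < pi/2"
  shows "cos t * cmod z \<le> Re z"
proof (cases "z = 0")
  case True then show ?thesis by simp
next
  case False
  with assms have a: "\<bar>Arg z\<bar> \<le> t" by (auto simp: sector_def)
  have e1: "Re z = cmod z * cos (Arg z)"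
    by (metis Re_rcis rcis_cmod_Arg)
  have e2: "cos (Arg z) = cos \<bar>Arg z\<bar>" by (simp add: abs_if)
  have "cos t \<le> cos \<bar>Arg z\<bar>"
    using a assms by (intro cos_monotone_0_pi_le) auto
  then have "cos t * cmod z \<le> cos \<bar>Arg z\<bar> * cmod z" by (rule mult_right_mono) simp
  also have "\<dots> = Re z" unfolding e1 e2 by (rule mult.commute)
  finally show ?thesis .
qed

lemma sector_sum:
  assumes "finite A" "\<And>k. k \<in> A \<Longrightarrow> z k \<in> sector t" "\<And>k. k \<in> A \<Longrightarrow> w k \<ge> 0" "0 \<le> t" "t < pi/2"
  shows "cos t * (\<Sum>k\<in>A. w k * cmod (z k)) \<le> cmod (\<Sum>k\<in>A. of_real (w k) * z k)"
proof -
  have "cos t * (\<Sum>k\<in>A. w k * cmod (z k)) = (\<Sum>k\<in>A. w k * (cos t * cmod (z k)))"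
    by (simp add: sum_distrib_left algebra_simps)
  also have "\<dots> \<le> (\<Sum>k\<in>A. w k * Re (z k))"
    using assms sector_Re by (intro sum_mono mult_left_mono) auto
  also have "\<dots> = Re (\<Sum>k\<in>A. of_real (w k) * z k)" by (simp add: Re_sum)
  also have "\<dots> \<le> cmod (\<Sum>k\<in>A. of_real (w k) * z k)" by (rule complex_Re_le_cmod)
  finally show ?thesis .
qed

lemma ps_Suc:
  "partial_sum c (Suc n) x = partial_sum c n x + (c (int n + 1) * exp (\<i> * of_int (int n + 1) * of_real x)
     + c (-(int n + 1)) * exp (\<i> * of_int (-(int n + 1)) * of_real x))"
proof -
  have e: "{-int (Suc n)..int (Suc n)} = insert (int n + 1) (insert (-(int n + 1)) {-int n..int n})" by auto
  show ?thesis unfolding partial_sum_def e by (simp add: algebra_simps)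
qed

lemma ps_diff:
  assumes "P \<le> Q"
  shows "partial_sum c Q x - partial_sum c P x =
    (\<Sum>k\<in>{int P<..int Q}. c k * exp (\<i> * of_int k * of_real x) + c (-k) * exp (\<i> * of_int (-k) * of_real x))"
  using assms
proof (induction Q)
  case 0 then show ?case by simp
next
  case (Suc Q)
  show ?case
  proof (cases "P = Suc Q")
    case True then show ?thesis by simp
  next
    case False
    then have "P \<le> Q" using Suc by simp
    have e: "{int P<..int (Suc Q)} = insert (int Q + 1) {int P<..int Q}" using \<open>P \<le> Q\<close> by auto
    show ?thesis using Suc.IH[OF \<open>P \<le> Q\<close>] unfolding e ps_Suc
      by (simp add: algebra_simps)
  qed
qed

lemma telesc:
  fixes c :: "int \<Rightarrow> complex"
  shows "cmod (c (m + int d) - c m) \<le> (\<Sum>n\<in>{m..<m + int d}. cmod (c n - c (n + 1)))"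
proof (induction d)
  case 0 then show ?case by simp
next
  case (Suc d)
  have e: "{m..<m + int (Suc d)} = insert (m + int d) {m..<m + int d}" by auto
  have "cmod (c (m + int (Suc d)) - c m) \<le> cmod (c (m + int d) - c (m + int d + 1)) + cmod (c (m + int d) - c m)"
  proof -
    have "c (m + int (Suc d)) - c m = (c (m + int d + 1) - c (m + int d)) + (c (m + int d) - c m)"
      by (simp add: algebra_simps)
    then have "cmod (c (m + int (Suc d)) - c m) \<le> cmod (c (m + int d + 1) - c (m + int d)) + cmod (c (m + int d) - c m)"
      by (metis norm_triangle_ineq)
    then show ?thesis by (simp add: norm_minus_commute)
  qed
  then show ?case unfolding e using Suc by simp
qed


lemma exp_diff_sin:
  "exp (\<i> * of_int k * of_real x) - exp (\<i> * of_int (-k) * of_real x) = 2 * \<i> * of_real (sin (of_int k * x))"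
proof -
  have a: "exp (\<i> * of_int k * of_real x) = cis (of_int k * x)" by (simp add: cis_conv_exp mult.commute mult.left_commute)
  have b: "exp (\<i> * of_int (-k) * of_real x) = cis (- (of_int k * x))" by (simp add: cis_conv_exp mult.commute mult.left_commute)
  show ?thesis unfolding a b by (simp add: complex_eq_iff)
qed

lemma sin_half:
  fixes k Q :: real
  assumes "Q > 0" "3 * k \<ge> Q" "k \<le> Q"
  shows "sin (k * (pi / (2 * Q))) \<ge> 1/2"
proof -
  have "pi/6 \<le> k * (pi / (2 * Q))" using assms pi_gt_zero
    by (simp add: field_simps)
  moreover have "k * (pi / (2 * Q)) \<le> pi/2" using assms pi_gt_zero by (simp add: field_simps)
  ultimately have "sin (pi/6) \<le> sin (k * (pi / (2 * Q)))"
    using pi_gt_zero by (subst sin_mono_le_eq) (auto intro: order_trans[of _ "pi/6"])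
  then show ?thesis by (simp add: sin_30)
qed

lemma window:
  fixes c :: "int \<Rightarrow> complex"
  assumes sec: "\<forall>n::int. n \<ge> 1 \<longrightarrow> c n + c (-n) \<in> sector t \<and> c n - c (-n) \<in> sector t"
    and t: "0 \<le> t" "t < pi/2"
    and hD: "\<And>x. cmod (partial_sum c Q x - partial_sum c P x) \<le> e"
    and PQ: "P < Q" "Q \<le> 3 * (P + 1)"
  shows "cos t * (\<Sum>k\<in>{int P<..int Q}. cmod (c k)) \<le> 2 * e"
proof -
  define A where "A = {int P<..int Q}"
  have fA: "finite A" by (simp add: A_def)
  have pos: "k \<in> A \<Longrightarrow> k \<ge> 1" for k by (auto simp: A_def)
  define E where "E = (\<lambda>k x. exp (\<i> * of_int k * of_real x))"
  have D: "partial_sum c Q x - partial_sum c P x = (\<Sum>k\<in>A. c k * E k x + c (-k) * E (-k) x)" for x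
    unfolding A_def E_def using ps_diff[of P Q c x] PQ by simp
  have ct: "cos t > 0" using t by (intro cos_gt_zero_pi) auto
  have s1: "cos t * (\<Sum>k\<in>A. 1 * cmod (c k + c (-k))) \<le> cmod (\<Sum>k\<in>A. of_real 1 * (c k + c (-k)))"
    using sec pos t fA by (intro sector_sum) auto
  have "(\<Sum>k\<in>A. of_real 1 * (c k + c (-k))) = partial_sum c Q 0 - partial_sum c P 0"
    unfolding D E_def by simp
  with s1 hD[of 0] have s1': "cos t * (\<Sum>k\<in>A. cmod (c k + c (-k))) \<le> e" by simp
  define x where "x = pi / (2 * real Q)"
  have Qp: "real Q > 0" using PQ by simp
  have sinb: "k \<in> A \<Longrightarrow> sin (of_int k * x) \<ge> 1/2" for k
    unfolding x_def using PQ by (intro sin_half) (auto simp: A_def)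
  have s2: "cos t * (\<Sum>k\<in>A. sin (of_int k * x) * cmod (c k - c (-k))) \<le> cmod (\<Sum>k\<in>A. of_real (sin (of_int k * x)) * (c k - c (-k)))"
    using sec pos t fA sinb by (intro sector_sum) (auto intro: order_trans[of 0 "1/2"])
  have "(partial_sum c Q x - partial_sum c P x) - (partial_sum c Q (-x) - partial_sum c P (-x))
      = (\<Sum>k\<in>A. (c k - c (-k)) * (E k x - E (-k) x))"
    unfolding D sum_subtractf[symmetric] E_def by (intro sum.cong) (auto simp: algebra_simps)
  also have "\<dots> = 2 * \<i> * (\<Sum>k\<in>A. of_real (sin (of_int k * x)) * (c k - c (-k)))"
    unfolding E_def exp_diff_sin sum_distrib_left by (intro sum.cong) (auto simp: algebra_simps)
  finally have "cmod (2 * \<i> * (\<Sum>k\<in>A. of_real (sin (of_int k * x)) * (c k - c (-k)))) \<le> 2 * e"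
    using hD[of x] hD[of "-x"] norm_triangle_ineq4 by (smt (verit))
  then have "2 * cmod (\<Sum>k\<in>A. of_real (sin (of_int k * x)) * (c k - c (-k))) \<le> 2 * e"
    by (simp add: norm_mult)
  with s2 have s2': "cos t * (\<Sum>k\<in>A. sin (of_int k * x) * cmod (c k - c (-k))) \<le> e" by simp
  have "(\<Sum>k\<in>A. cmod (c k - c (-k))) \<le> 2 * (\<Sum>k\<in>A. sin (of_int k * x) * cmod (c k - c (-k)))"
    unfolding sum_distrib_left using sinb
  proof (intro sum_mono)
    fix k assume "k \<in> A"
    then have "1/2 * cmod (c k - c (-k)) \<le> sin (of_int k * x) * cmod (c k - c (-k))"
      using sinb by (intro mult_right_mono) auto
    then show "cmod (c k - c (- k)) \<le> 2 * (sin (real_of_int k * x) * cmod (c k - c (- k)))" by simp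
  qed
  then have "cos t * (\<Sum>k\<in>A. cmod (c k - c (-k))) \<le> cos t * (2 * (\<Sum>k\<in>A. sin (of_int k * x) * cmod (c k - c (-k))))"
    using ct by (intro mult_left_mono) auto
  with s2' have s2'': "cos t * (\<Sum>k\<in>A. cmod (c k - c (-k))) \<le> 2 * e" by simp
  have "2 * (\<Sum>k\<in>A. cmod (c k)) \<le> (\<Sum>k\<in>A. cmod (c k + c (-k))) + (\<Sum>k\<in>A. cmod (c k - c (-k)))"
    unfolding sum_distrib_left sum.distrib[symmetric]
  proof (intro sum_mono)
    fix k show "2 * cmod (c k) \<le> cmod (c k + c (-k)) + cmod (c k - c (-k))"
      using norm_triangle_ineq[of "c k + c (-k)" "c k - c (-k)"] by simp
  qed
  then have "cos t * (2 * (\<Sum>k\<in>A. cmod (c k))) \<le> cos t * (\<Sum>k\<in>A. cmod (c k + c (-k))) + cos t * (\<Sum>k\<in>A. cmod (c k - c (-k)))"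
    using ct by (simp add: distrib_left[symmetric] mult_left_mono)
  with s1' s2'' have "cos t * (2 * (\<Sum>k\<in>A. cmod (c k))) \<le> 3 * e" by simp
  moreover have "e \<ge> 0" using hD[of 0] norm_ge_zero order_trans by blast
  moreover have "cos t * (2 * (\<Sum>k\<in>A. cmod (c k))) = 2 * (cos t * (\<Sum>k\<in>A. cmod (c k)))" by simp
  ultimately have "cos t * (\<Sum>k\<in>A. cmod (c k)) \<le> 2 * e" by linarith
  then show ?thesis unfolding A_def .
qed


lemma delta_bound:
  fixes c :: "int \<Rightarrow> complex"
  assumes hyp: "\<forall>m::int. m \<ge> 1 \<longrightarrow>
           (\<Sum>n\<in>{m..2*m}. cmod (c n - c (n + 1)))
             \<le> M * Max ((\<lambda>n. cmod (c n)) ` {m..<m + int N0})"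
    and N0: "N0 \<ge> 1" and m: "m \<ge> 1" "m \<le> k" "k \<le> 2*m+1"
  shows "cmod (c k) \<le> (M + 1) * Max ((\<lambda>n. cmod (c n)) ` {m..<m + int N0})"
proof -
  define \<mu> where "\<mu> = Max ((\<lambda>n. cmod (c n)) ` {m..<m + int N0})"
  have c1: "cmod (c m) \<le> \<mu>" unfolding \<mu>_def using N0 by (intro Max_ge) auto
  have k: "k = m + int (nat (k - m))" using m by simp
  have "cmod (c k - c m) \<le> (\<Sum>n\<in>{m..<m + int (nat (k - m))}. cmod (c n - c (n + 1)))"
    by (subst k) (rule telesc)
  also have "\<dots> \<le> (\<Sum>n\<in>{m..2*m}. cmod (c n - c (n + 1)))"
    using m by (intro sum_mono2) auto
  also have "\<dots> \<le> M * \<mu>" unfolding \<mu>_def using hyp m by auto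
  finally have "cmod (c k - c m) \<le> M * \<mu>" .
  then have "cmod (c k) \<le> \<mu> + M * \<mu>" using c1 norm_triangle_ineq2[of "c k" "c m"] by linarith
  then show ?thesis unfolding \<mu>_def by (simp add: algebra_simps)
qed

lemma max_le_sum:
  fixes g :: "int \<Rightarrow> real"
  assumes "finite W" "W \<noteq> {}" "\<And>x. g x \<ge> 0"
  shows "Max (g ` W) \<le> sum g W"
proof -
  have "Max (g ` W) \<in> g ` W" using assms by (intro Max_in) auto
  then obtain j where j: "j \<in> W" "Max (g ` W) = g j" by auto
  then show ?thesis using assms member_le_sum[of j W g] by auto
qed

lemma blocks:
  fixes c :: "int \<Rightarrow> complex"
  assumes "N0 \<ge> 1"
  shows "(\<Sum>i<r. Max ((\<lambda>n. cmod (c n)) ` {h + int i * int N0..<h + int i * int N0 + int N0}))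
     \<le> (\<Sum>k\<in>{h..<h + int r * int N0}. cmod (c k))"
proof (induction r)
  case 0 then show ?case by simp
next
  case (Suc r)
  have e: "{h..<h + int (Suc r) * int N0} = {h..<h + int r * int N0} \<union> {h + int r * int N0..<h + int r * int N0 + int N0}"
  proof -
    have "{h..<h + int r * int N0} \<union> {h + int r * int N0..<h + int r * int N0 + int N0} = {h..<h + int r * int N0 + int N0}"
      by (intro ivl_disj_un_two(3)) auto
    moreover have "h + int (Suc r) * int N0 = h + int r * int N0 + int N0" by (simp add: algebra_simps)
    ultimately show ?thesis by metis
  qed
  have s: "(\<Sum>k\<in>{h..<h + int (Suc r) * int N0}. cmod (c k)) =
     (\<Sum>k\<in>{h..<h + int r * int N0}. cmod (c k)) + (\<Sum>k\<in>{h + int r * int N0..<h + int r * int N0 + int N0}. cmod (c k))"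
    unfolding e by (intro sum.union_disjoint) auto
  have "Max ((\<lambda>n. cmod (c n)) ` {h + int r * int N0..<h + int r * int N0 + int N0}) \<le> (\<Sum>k\<in>{h + int r * int N0..<h + int r * int N0 + int N0}. cmod (c k))"
    using assms by (intro max_le_sum) auto
  then show ?case using Suc s by simp
qed

theorem lemma2:
  fixes c :: "int \<Rightarrow> complex" and \<theta>0 :: real and N0 :: nat and M :: real
    and f :: "real \<Rightarrow> complex"
  assumes "0 \<le> \<theta>0" and "\<theta>0 < pi / 2"
    and "\<forall>n::int. n \<ge> 1 \<longrightarrow> c n + c (-n) \<in> sector \<theta>0 \<and> c n - c (-n) \<in> sector \<theta>0"
    and "N0 \<ge> 1" and "M > 0"
    and "\<forall>m::int. m \<ge> 1 \<longrightarrow>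
           (\<Sum>n\<in>{m..2*m}. cmod (c n - c (n + 1)))
             \<le> M * Max ((\<lambda>n. cmod (c n)) ` {m..<m + int N0})"
    and "f = (\<lambda>x. lim (\<lambda>n. partial_sum c n x))"
    and "uniform_limit UNIV (partial_sum c) f sequentially"
  shows "(\<lambda>n::nat. of_nat n * c (int n)) \<longlonglongrightarrow> 0"
proof (rule LIMSEQ_I)
  fix r :: real assume r: "r > 0"
  have ct: "cos \<theta>0 > 0" using assms(1,2) by (intro cos_gt_zero_pi) auto
  define K where "K = 2 / cos \<theta>0"
  have K: "K > 0" using ct by (simp add: K_def)
  define e where "e = r / (4 * real N0 * (M + 2) * K)"
  have e: "e > 0" using r K assms(4,5) by (simp add: e_def)
  have "\<forall>\<^sub>F n in sequentially. \<forall>x\<in>UNIV. dist (partial_sum c n x) (f x) < e/2"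
    using uniform_limitD[OF assms(8), of "e/2"] e by simp
  then obtain P0 where P0: "\<And>n x. n \<ge> P0 \<Longrightarrow> dist (partial_sum c n x) (f x) < e/2"
    unfolding eventually_sequentially by blast
  have cau: "cmod (partial_sum c Q x - partial_sum c P x) \<le> e" if "P \<ge> P0" "Q \<ge> P0" for P Q x
  proof -
    have "cmod (partial_sum c Q x - partial_sum c P x) = dist (partial_sum c Q x) (partial_sum c P x)"
      by (simp add: dist_norm)
    also have "\<dots> \<le> dist (partial_sum c Q x) (f x) + dist (partial_sum c P x) (f x)"
      by (rule dist_triangle2)
    also have "\<dots> \<le> e" using P0[OF that(1), of x] P0[OF that(2), of x] by simp
    finally show ?thesis .
  qed
  have win: "(\<Sum>k\<in>{int P<..int Q}. cmod (c k)) \<le> K * e" if "P \<ge> P0" "P < Q" "Q \<le> 3 * (P + 1)" for P Q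
  proof -
    have "cos \<theta>0 * (\<Sum>k\<in>{int P<..int Q}. cmod (c k)) \<le> 2 * e"
      using that assms(1,2,3) by (intro window[where P=P and Q=Q]) (auto intro!: cau)
    then show ?thesis using ct unfolding K_def by (simp add: field_simps)
  qed
  show "\<exists>no. \<forall>n\<ge>no. norm (of_nat n * c (int n) - 0) < r"
  proof (intro exI allI impI)
    fix m :: nat assume m: "m \<ge> 2 * P0 + 4"
    define h where "h = m div 2"
    have h1: "h \<ge> P0 + 2" using m by (simp add: h_def)
    have h2: "m \<le> 2 * h + 1" "2 * h \<le> m" by (auto simp: h_def)
    define S where "S = (\<Sum>k\<in>{int (h - 1)<..int m}. cmod (c k))"
    have S: "S \<le> K * e" unfolding S_def using h1 h2 by (intro win) auto
    have cm: "cmod (c (int m)) \<le> K * e"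
    proof -
      have eq: "{int (m - 1)<..int m} = {int m}" using m by auto
      have "(\<Sum>k\<in>{int (m - 1)<..int m}. cmod (c k)) \<le> K * e" by (rule win) (use m in auto)
      then show ?thesis unfolding eq by simp
    qed
    define q where "q = (m - h) div N0"
    have Sge: "(\<Sum>i<q. Max ((\<lambda>n. cmod (c n)) ` {int h + int i * int N0..<int h + int i * int N0 + int N0})) \<le> S"
    proof -
      have "q * N0 \<le> m - h" unfolding q_def by simp
      then have "int q * int N0 \<le> int m - int h" using h2 by (simp flip: of_nat_mult)
      then have sub: "{int h..<int h + int q * int N0} \<subseteq> {int (h - 1)<..int m}" using h1 by auto
      have "(\<Sum>k\<in>{int h..<int h + int q * int N0}. cmod (c k)) \<le> S"
        unfolding S_def using sub by (intro sum_mono2) auto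
      then show ?thesis using blocks[OF assms(4), where r=q and c=c and h="int h"] by linarith
    qed
    have each: "cmod (c (int m)) / (M + 1) \<le> Max ((\<lambda>n. cmod (c n)) ` {int h + int i * int N0..<int h + int i * int N0 + int N0})"
      if "i < q" for i
    proof -
      have "(i + 1) * N0 \<le> q * N0" using that by (intro mult_right_mono) auto
      also have "q * N0 \<le> m - h" unfolding q_def by simp
      finally have iq: "i * N0 + N0 \<le> m - h" by simp
      have "cmod (c (int m)) \<le> (M + 1) * Max ((\<lambda>n. cmod (c n)) ` {int h + int i * int N0..<int h + int i * int N0 + int N0})"
        using iq h1 h2 assms(4)
        by (intro delta_bound[OF assms(6) assms(4)]) (auto simp flip: of_nat_mult)
      then show ?thesis using assms(5) by (simp add: field_simps)
    qed
    have "(\<Sum>i<q. cmod (c (int m)) / (M + 1)) \<le> (\<Sum>i<q. Max ((\<lambda>n. cmod (c n)) ` {int h + int i * int N0..<int h + int i * int N0 + int N0}))"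
      by (rule sum_mono) (rule each, simp)
    then have "real q * (cmod (c (int m)) / (M + 1)) \<le> S" using Sge by simp
    then have q1: "real q * cmod (c (int m)) \<le> (M + 1) * S"
      using assms(5) by (simp add: field_simps)
    have qb: "real q * cmod (c (int m)) \<le> (M + 1) * (K * e)"
      using q1 mult_left_mono[OF S, of "M + 1"] assms(5) by linarith
    have "m - h < N0 * (q + 1)"
    proof -
      have "m - h = N0 * q + (m - h) mod N0" unfolding q_def by simp
      moreover have "(m - h) mod N0 < N0" using assms(4) by simp
      ultimately show ?thesis by simp
    qed
    then have "m \<le> 2 * (N0 * (q + 1))" using h2 by linarith
    then have "real m \<le> real (2 * (N0 * (q + 1)))" by (rule of_nat_mono)
    then have mq: "real m \<le> 2 * real N0 * (real q + 1)" by (simp add: algebra_simps)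
    have "norm (of_nat m * c (int m) - 0) = real m * cmod (c (int m))" by (simp add: norm_mult)
    also have "\<dots> \<le> 2 * real N0 * (real q + 1) * cmod (c (int m))"
      using mq by (intro mult_right_mono) auto
    also have "\<dots> = 2 * real N0 * (real q * cmod (c (int m)) + cmod (c (int m)))" by (simp add: algebra_simps)
    also have "\<dots> \<le> 2 * real N0 * ((M + 1) * (K * e) + K * e)"
      using qb cm by (intro mult_left_mono add_mono) auto
    also have "\<dots> = (2 * real N0 * (M + 2) * K) * e" by (simp add: algebra_simps)
    also have "\<dots> = r / 2"
    proof -
      have den: "4 * real N0 * (M + 2) * K > 0" using K assms(4,5) by simp
      then show ?thesis unfolding e_def by (simp add: field_simps)
    qed
    also have "\<dots> < r" using r by simp
    finally show "norm (of_nat m * c (int m) - 0) < r" .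
  qed
qed

end
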